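(* Let $\mathscr G=(\mathscr V,\mathscr E)$ be a finite connected graph with $N$ vertices and $M\ge0$ an integer. The uniform reshuffling model $(X_t)$ on $\mathscr C_{N,M}$ has a unique stationary distribution $\pi_X$, and $$\lim_{t\to\infty}P_\eta(X_t=\xi)=\pi_X(\xi)\quad\text{for all }\xi,\eta\in\mathscr C_{N,M},$$ where $P_\eta$ denotes the law of the process started from $X_0=\eta$.
   Context: $\mathscr C_{N,M}$ is the set of maps $\xi:\mathscr V\to\mathbb N$ with $\sum_x\xi(x)=M$. The uniform reshuffling model is the discrete-time Markov chain on $\mathscr C_{N,M}$: at each step an edge $(x,y)\in\mathscr E$ is chosen uniformly at random, $U$ is drawn uniformly from $\{0,1,\dots,X_t(x)+X_t(y)\}$, and $X_{t+1}(x)=U$, $X_{t+1}(y)=X_t(x)+X_t(y)-U$, $X_{t+1}(z)=X_t(z)$ for $z\notin\{x,y\}$. *)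

theory Defs
  imports "HOL-Probability.Probability"
begin

text \<open>Vertices are the elements of a finite type 'v (so N = CARD('v)).
  Edges are a set E of ordered pairs; an undirected graph is a symmetric,
  irreflexive E.  Configurations: maps 'v \<Rightarrow> nat.\<close>

definition configs :: "nat \<Rightarrow> ('v::finite \<Rightarrow> nat) set" where
  "configs M = {\<xi>. (\<Sum>x\<in>UNIV. \<xi> x) = M}"

definition connected_graph :: "('v::finite \<times> 'v) set \<Rightarrow> bool" where
  "connected_graph E \<longleftrightarrow> sym E \<and> irrefl E \<and> (\<forall>x y. (x, y) \<in> E\<^sup>*)"

text \<open>One step of the uniform reshuffling chain.  If there are no edges
  (only possible for N = 1) the chain stays put.\<close>
definition reshuffle_step :: "('v \<times> 'v) set \<Rightarrow> ('v \<Rightarrow> nat) \<Rightarrow> ('v \<Rightarrow> nat) pmf" where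
  "reshuffle_step E \<xi> =
     (if E = {} then return_pmf \<xi>
      else bind_pmf (pmf_of_set E) (\<lambda>(x, y).
             bind_pmf (pmf_of_set {0..\<xi> x + \<xi> y}) (\<lambda>u.
               return_pmf (\<xi>(x := u, y := \<xi> x + \<xi> y - u)))))"

primrec reshuffle_law :: "('v \<times> 'v) set \<Rightarrow> ('v \<Rightarrow> nat) \<Rightarrow> nat \<Rightarrow> ('v \<Rightarrow> nat) pmf" where
  "reshuffle_law E \<eta> 0 = return_pmf \<eta>"
| "reshuffle_law E \<eta> (Suc t) = bind_pmf (reshuffle_law E \<eta> t) (reshuffle_step E)"

definition reshuffle_stationary :: "('v::finite \<times> 'v) set \<Rightarrow> nat \<Rightarrow> ('v \<Rightarrow> nat) pmf \<Rightarrow> bool" where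
  "reshuffle_stationary E M \<pi> \<longleftrightarrow>
     set_pmf \<pi> \<subseteq> configs M \<and> bind_pmf \<pi> (reshuffle_step E) = \<pi>"

end

theory Submission
  imports Defs
begin


lemma finite_configs: "finite (configs M :: ('v::finite \<Rightarrow> nat) set)"
proof -
  have "configs M \<subseteq> {f. \<forall>x. (x \<in> (UNIV::'v set) \<longrightarrow> f x \<in> {0..M}) \<and> (x \<notin> UNIV \<longrightarrow> f x = 0)}"
    unfolding configs_def by (auto intro: member_le_sum[where f="\<lambda>x. f x" for f, simplified] simp: member_le_sum)
  moreover have "finite {f. \<forall>x. (x \<in> (UNIV::'v set) \<longrightarrow> f x \<in> {0..M}) \<and> (x \<notin> UNIV \<longrightarrow> f x = (0::nat))}"
    by (rule finite_set_of_finite_funs) auto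
  ultimately show ?thesis by (rule finite_subset)
qed

lemma configs_ne: "configs M \<noteq> ({} :: ('v::finite \<Rightarrow> nat) set)"
proof -
  obtain x0 :: 'v where True by simp
  have "(\<lambda>x. if x = x0 then M else 0) \<in> configs M"
    unfolding configs_def by (simp add: sum.delta)
  thus ?thesis by auto
qed

lemma sum_upd1: "(\<Sum>z\<in>UNIV. (f(x:=u)) z) + f x = (\<Sum>z\<in>UNIV. f z) + (u::nat)"
  for f :: "'v::finite \<Rightarrow> nat"
proof -
  have a: "(\<Sum>z\<in>UNIV. (f(x:=u)) z) = u + (\<Sum>z\<in>UNIV-{x}. f z)"
    by (subst sum.remove[of UNIV x]) (auto intro!: sum.cong)
  have b: "(\<Sum>z\<in>UNIV. f z) = f x + (\<Sum>z\<in>UNIV-{x}. f z)"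
    by (subst sum.remove[of UNIV x]) auto
  show ?thesis using a b by simp
qed

lemma sum_upd2: "x \<noteq> y \<Longrightarrow> (\<Sum>z\<in>UNIV. (f(x:=u, y:=v)) z) + f x + f y = (\<Sum>z\<in>UNIV. f z) + u + (v::nat)"
  for f :: "'v::finite \<Rightarrow> nat"
  using sum_upd1[of "f(x:=u)" y v] sum_upd1[of f x u] by simp



lemma irreflD': "irrefl E \<Longrightarrow> (x,y) \<in> E \<Longrightarrow> x \<noteq> y"
  by (auto simp: irrefl_def)

definition inr :: "('v \<Rightarrow> nat) \<Rightarrow> 'v \<Rightarrow> 'v \<Rightarrow> ('v \<Rightarrow> nat) pmf" where
  "inr \<xi> x y = bind_pmf (pmf_of_set {0..\<xi> x + \<xi> y}) (\<lambda>u. return_pmf (\<xi>(x := u, y := \<xi> x + \<xi> y - u)))"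

lemma step_eq: "E \<noteq> {} \<Longrightarrow> reshuffle_step E \<xi> = bind_pmf (pmf_of_set E) (\<lambda>(x,y). inr \<xi> x y)"
  unfolding reshuffle_step_def inr_def by simp

lemma pmf_inr:
  assumes "x \<noteq> y"
  shows "pmf (inr \<xi> x y) \<xi>' =
    (if (\<forall>z. z \<noteq> x \<longrightarrow> z \<noteq> y \<longrightarrow> \<xi> z = \<xi>' z) \<and> \<xi>' x + \<xi>' y = \<xi> x + \<xi> y
     then 1 / (real (\<xi> x + \<xi> y) + 1) else 0)"
proof -
  define s where "s = \<xi> x + \<xi> y"
  define C where "C = ((\<forall>z. z \<noteq> x \<longrightarrow> z \<noteq> y \<longrightarrow> \<xi> z = \<xi>' z) \<and> \<xi>' x + \<xi>' y = s)"
  have 1: "pmf (inr \<xi> x y) \<xi>' = (\<Sum>u\<in>{0..s}. indicator {\<xi>'} (\<xi>(x := u, y := s - u))) / real (card {0..s})"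
    unfolding inr_def s_def by (subst pmf_bind_pmf_of_set) auto
  have iff: "(\<xi>(x := u, y := s - u) = \<xi>') \<longleftrightarrow> (u = \<xi>' x \<and> C)" if u: "u \<le> s" for u
  proof
    assume h: "\<xi>(x := u, y := s - u) = \<xi>'"
    have "\<xi>' x = (\<xi>(x := u, y := s - u)) x" by (simp only: h)
    then have a: "\<xi>' x = u" using assms by simp
    have "\<xi>' y = (\<xi>(x := u, y := s - u)) y" by (simp only: h)
    then have b: "\<xi>' y = s - u" by simp
    have c: "\<xi> z = \<xi>' z" if "z \<noteq> x" "z \<noteq> y" for z
    proof -
      have "\<xi>' z = (\<xi>(x := u, y := s - u)) z" by (simp only: h)
      then show ?thesis using that by simp
    qed
    show "u = \<xi>' x \<and> C" unfolding C_def using a b c u by auto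
  next
    assume "u = \<xi>' x \<and> C"
    then show "\<xi>(x := u, y := s - u) = \<xi>'" using assms unfolding C_def by (auto simp: fun_eq_iff)
  qed
  have 2: "(\<Sum>u\<in>{0..s}. indicator {\<xi>'} (\<xi>(x := u, y := s - u)) :: real)
      = (\<Sum>u\<in>{0..s}. if u = \<xi>' x then (if C then 1 else 0) else 0)"
  proof (rule sum.cong[OF refl])
    fix u assume u: "u \<in> {0..s}"
    show "indicator {\<xi>'} (\<xi>(x := u, y := s - u)) = (if u = \<xi>' x then (if C then 1 else 0) else (0::real))"
      using iff[of u] u by (simp only: indicator_def singleton_iff mem_Collect_eq atLeastAtMost_iff) auto
  qed
  have 3: "(\<Sum>u\<in>{0..s}. if u = \<xi>' x then (if C then 1 else 0) else 0) = (if C then 1 else (0::real))"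
  proof (cases C)
    case True
    then have "\<xi>' x \<in> {0..s}" unfolding C_def by auto
    then show ?thesis using True by (simp add: sum.delta')
  next
    case False then show ?thesis by simp
  qed
  show ?thesis unfolding 1 2 3 unfolding C_def[symmetric] s_def[symmetric] by simp
qed

lemma pmf_inr_sym:
  assumes "x \<noteq> y"
  shows "pmf (inr \<xi> x y) \<xi>' = pmf (inr \<xi>' x y) \<xi>"
proof -
  have e: "(\<forall>z. z \<noteq> x \<longrightarrow> z \<noteq> y \<longrightarrow> \<xi> z = \<xi>' z) = (\<forall>z. z \<noteq> x \<longrightarrow> z \<noteq> y \<longrightarrow> \<xi>' z = \<xi> z)" by auto
  show ?thesis unfolding pmf_inr[OF assms] e by auto
qed

lemma step_sym:
  fixes E :: "('v::finite \<times> 'v) set"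
  assumes "irrefl E"
  shows "pmf (reshuffle_step E \<xi>) \<xi>' = pmf (reshuffle_step E \<xi>') \<xi>"
proof (cases "E = {}")
  case True then show ?thesis by (auto simp: reshuffle_step_def indicator_def)
next
  case False
  have fin: "finite E" by simp
  show ?thesis unfolding step_eq[OF False] pmf_bind_pmf_of_set[OF False fin]
    by (intro arg_cong2[where f="(/)"] sum.cong refl)
       (auto intro: pmf_inr_sym dest: irreflD'[OF assms])
qed

lemma step_support:
  fixes E :: "('v::finite \<times> 'v) set"
  assumes "irrefl E" "\<xi> \<in> configs M"
  shows "set_pmf (reshuffle_step E \<xi>) \<subseteq> configs M"
proof (cases "E = {}")
  case True then show ?thesis using assms by (simp add: reshuffle_step_def)
next
  case False
  have fin: "finite E" by simp
  show ?thesis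
  proof
    fix \<zeta> assume "\<zeta> \<in> set_pmf (reshuffle_step E \<xi>)"
    then have "\<exists>x y u. (x,y) \<in> E \<and> u \<le> \<xi> x + \<xi> y \<and> \<zeta> = \<xi>(x := u, y := \<xi> x + \<xi> y - u)"
      using False fin by (auto simp: step_eq inr_def split: prod.splits)
    then obtain x y u where e: "(x,y) \<in> E" and u: "u \<le> \<xi> x + \<xi> y"
      and z: "\<zeta> = \<xi>(x := u, y := \<xi> x + \<xi> y - u)" by blast
    have "x \<noteq> y" using e assms(1) by (rule irreflD'[rotated])
    from sum_upd2[OF this, of \<xi> u "\<xi> x + \<xi> y - u"] u
    show "\<zeta> \<in> configs M" using assms(2) z by (simp add: configs_def)
  qed
qed

lemma inr_mem: "u \<le> \<xi> x + \<xi> y \<Longrightarrow> \<xi>(x:=u, y:=\<xi> x + \<xi> y - u) \<in> set_pmf (inr \<xi> x y)"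
  unfolding inr_def set_bind_pmf set_return_pmf
  by (rule UN_I[of u]) auto

lemma step_mem: "(x,y) \<in> E \<Longrightarrow> \<zeta> \<in> set_pmf (inr \<xi> x y) \<Longrightarrow> \<zeta> \<in> set_pmf (reshuffle_step E \<xi>)"
  for E :: "('v::finite \<times> 'v) set"
proof -
  assume a: "(x,y) \<in> E" "\<zeta> \<in> set_pmf (inr \<xi> x y)"
  then have ne: "E \<noteq> {}" by auto
  show ?thesis using a by (subst step_eq[OF ne]) (auto simp: set_pmf_of_set[OF ne] intro!: bexI[of _ "(x,y)"])
qed

lemma lazy: "\<xi> \<in> set_pmf (reshuffle_step E \<xi>)" for E :: "('v::finite \<times> 'v) set"
proof (cases "E = {}")
  case True then show ?thesis by (simp add: reshuffle_step_def)
next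
  case False
  then obtain x y where e: "(x,y) \<in> E" by auto
  have fin: "finite E" by simp
  have eq: "\<xi>(x := \<xi> x, y := \<xi> x + \<xi> y - \<xi> x) = \<xi>" by simp
  show ?thesis using step_mem[OF e inr_mem[of "\<xi> x" \<xi> x y]] unfolding eq by simp
qed

definition mv :: "('v \<Rightarrow> nat) \<Rightarrow> 'v \<Rightarrow> 'v \<Rightarrow> 'v \<Rightarrow> nat" where
  "mv \<xi> a b = (if a = b then \<xi> else \<xi>(a := \<xi> a - 1, b := \<xi> b + 1))"

lemma mv_step:
  fixes E :: "('v::finite \<times> 'v) set"
  assumes "irrefl E" "(a,b) \<in> E" "\<xi> a > 0"
  shows "mv \<xi> a b \<in> set_pmf (reshuffle_step E \<xi>)"
proof -
  have ne: "E \<noteq> {}" using assms by auto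
  have fin: "finite E" by simp
  have ab: "a \<noteq> b" using assms(2) assms(1) by (rule irreflD'[rotated])
  have "mv \<xi> a b = \<xi>(a := \<xi> a - 1, b := \<xi> a + \<xi> b - (\<xi> a - 1))"
    using ab assms(3) by (auto simp: mv_def fun_eq_iff)
  then show ?thesis
    using step_mem[OF assms(2) inr_mem[of "\<xi> a - 1" \<xi> a b]] by simp
qed



primrec evo :: "('v \<times> 'v) set \<Rightarrow> ('v \<Rightarrow> nat) pmf \<Rightarrow> nat \<Rightarrow> ('v \<Rightarrow> nat) pmf" where
  "evo E \<nu> 0 = \<nu>"
| "evo E \<nu> (Suc t) = bind_pmf (evo E \<nu> t) (reshuffle_step E)"

lemma law_evo: "reshuffle_law E \<eta> t = evo E (return_pmf \<eta>) t"
  by (induction t) auto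

lemma evo_add: "evo E \<nu> (t + k) = bind_pmf (evo E \<nu> t) (\<lambda>\<zeta>. reshuffle_law E \<zeta> k)"
  by (induction k) (auto simp: bind_return_pmf' bind_assoc_pmf)

lemma evo_const: "bind_pmf \<pi> (reshuffle_step E) = \<pi> \<Longrightarrow> evo E \<pi> t = \<pi>"
  by (induction t) auto

lemma evo_support:
  fixes E :: "('v::finite \<times> 'v) set"
  assumes "irrefl E" "set_pmf \<nu> \<subseteq> configs M"
  shows "set_pmf (evo E \<nu> t) \<subseteq> configs M"
proof (induction t)
  case 0 then show ?case using assms by simp
next
  case (Suc t)
  then show ?case using step_support[OF assms(1)] by fastforce
qed

lemma law_support:
  fixes E :: "('v::finite \<times> 'v) set"
  assumes "irrefl E" "\<eta> \<in> configs M"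
  shows "set_pmf (reshuffle_law E \<eta> t) \<subseteq> configs M"
  using evo_support[OF assms(1), of "return_pmf \<eta>" M t] assms by (simp add: law_evo)

lemma pmf_bind_fin:
  assumes "finite S" "set_pmf \<nu> \<subseteq> S"
  shows "pmf (bind_pmf \<nu> f) b = (\<Sum>a\<in>S. pmf \<nu> a * pmf (f a) b)"
  unfolding pmf_bind using assms
  by (subst integral_measure_pmf_real[where A=S]) (auto simp: mult.commute)

lemma law_mono:
  fixes E :: "('v::finite \<times> 'v) set"
  assumes "n \<le> m"
  shows "set_pmf (reshuffle_law E a n) \<subseteq> set_pmf (reshuffle_law E a m)"
  using assms
proof (induction m)
  case 0 then show ?case by simp
next
  case (Suc m)
  have "set_pmf (reshuffle_law E a m) \<subseteq> set_pmf (reshuffle_law E a (Suc m))"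
    using lazy[of _ E] by auto
  then show ?case using Suc by (cases "n = Suc m") auto
qed

lemma row_sum:
  fixes E :: "('v::finite \<times> 'v) set"
  assumes "irrefl E" "\<xi> \<in> configs M"
  shows "(\<Sum>\<xi>'\<in>configs M. pmf (reshuffle_step E \<xi>) \<xi>') = 1"
  by (rule sum_pmf_eq_1[OF finite_configs step_support[OF assms]])

lemma col_sum:
  fixes E :: "('v::finite \<times> 'v) set"
  assumes "irrefl E" "\<xi>' \<in> configs M"
  shows "(\<Sum>\<xi>\<in>configs M. pmf (reshuffle_step E \<xi>) \<xi>') = 1"
proof -
  have "(\<Sum>\<xi>\<in>configs M. pmf (reshuffle_step E \<xi>) \<xi>') = (\<Sum>\<xi>\<in>configs M. pmf (reshuffle_step E \<xi>') \<xi>)"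
    by (rule sum.cong[OF refl]) (rule step_sym[OF assms(1)])
  then show ?thesis using row_sum[OF assms] by simp
qed

lemma col_sum_law:
  fixes E :: "('v::finite \<times> 'v) set"
  assumes "irrefl E" "b \<in> configs M"
  shows "(\<Sum>a\<in>configs M. pmf (reshuffle_law E a k) b) = 1"
  using assms(2)
proof (induction k arbitrary: b)
  case 0
  then show ?case by (simp add: indicator_def sum.delta' finite_configs)
next
  case (Suc k)
  have "(\<Sum>a\<in>configs M. pmf (reshuffle_law E a (Suc k)) b)
      = (\<Sum>a\<in>configs M. \<Sum>c\<in>configs M. pmf (reshuffle_law E a k) c * pmf (reshuffle_step E c) b)"
    by (intro sum.cong refl, simp, rule pmf_bind_fin[OF finite_configs law_support[OF assms(1)]])
  also have "\<dots> = (\<Sum>c\<in>configs M. (\<Sum>a\<in>configs M. pmf (reshuffle_law E a k) c) * pmf (reshuffle_step E c) b)"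
    by (subst sum.swap) (simp add: sum_distrib_right)
  also have "\<dots> = (\<Sum>c\<in>configs M. pmf (reshuffle_step E c) b)"
    using Suc.IH by simp
  also have "\<dots> = 1" using col_sum[OF assms(1) Suc.prems] .
  finally show ?case .
qed



lemma mix_upper:
  fixes w a :: "'a \<Rightarrow> real"
  assumes "finite S" "S \<noteq> {}" "\<forall>z\<in>S. w z \<ge> \<delta>" "\<delta> \<ge> 0" "(\<Sum>z\<in>S. w z) = 1"
  shows "(\<Sum>z\<in>S. w z * a z) \<le> Max (a`S) - \<delta> * (Max (a`S) - Min (a`S))"
proof -
  let ?Mx = "Max (a`S)" let ?Mn = "Min (a`S)"
  have "Min (a`S) \<in> a`S" using assms(1,2) by (intro Min_in) auto
  then obtain z0 where z0: "z0 \<in> S" "a z0 = ?Mn" by (metis imageE)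
  have le: "\<forall>z\<in>S. a z \<le> ?Mx" using assms(1) by auto
  have "(\<Sum>z\<in>S. w z * (a z - ?Mx)) = (\<Sum>z\<in>S. w z * a z) - ?Mx"
    using assms(5) by (simp add: right_diff_distrib sum_subtractf sum_distrib_right[symmetric])
  moreover have "(\<Sum>z\<in>S. w z * (a z - ?Mx)) = w z0 * (a z0 - ?Mx) + (\<Sum>z\<in>S-{z0}. w z * (a z - ?Mx))"
    by (rule sum.remove[OF assms(1) z0(1)])
  moreover have "(\<Sum>z\<in>S-{z0}. w z * (a z - ?Mx)) \<le> 0"
    by (rule sum_nonpos) (use assms(3,4) le in \<open>auto intro!: mult_nonneg_nonpos\<close>)
  moreover have "w z0 * (a z0 - ?Mx) \<le> \<delta> * (a z0 - ?Mx)"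
    by (rule mult_right_mono_neg) (use assms(3) z0 le in auto)
  ultimately show ?thesis using z0 by (simp add: algebra_simps)
qed

lemma mix_lower:
  fixes w a :: "'a \<Rightarrow> real"
  assumes "finite S" "S \<noteq> {}" "\<forall>z\<in>S. w z \<ge> \<delta>" "\<delta> \<ge> 0" "(\<Sum>z\<in>S. w z) = 1"
  shows "(\<Sum>z\<in>S. w z * a z) \<ge> Min (a`S) + \<delta> * (Max (a`S) - Min (a`S))"
proof -
  let ?Mx = "Max (a`S)" let ?Mn = "Min (a`S)"
  have "Max (a`S) \<in> a`S" using assms(1,2) by (intro Max_in) auto
  then obtain z0 where z0: "z0 \<in> S" "a z0 = ?Mx" by (metis imageE)
  have le: "\<forall>z\<in>S. a z \<ge> ?Mn" using assms(1) by auto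
  have "(\<Sum>z\<in>S. w z * (a z - ?Mn)) = (\<Sum>z\<in>S. w z * a z) - ?Mn"
    using assms(5) by (simp add: right_diff_distrib sum_subtractf sum_distrib_right[symmetric])
  moreover have "(\<Sum>z\<in>S. w z * (a z - ?Mn)) = w z0 * (a z0 - ?Mn) + (\<Sum>z\<in>S-{z0}. w z * (a z - ?Mn))"
    by (rule sum.remove[OF assms(1) z0(1)])
  moreover have "(\<Sum>z\<in>S-{z0}. w z * (a z - ?Mn)) \<ge> 0"
    by (rule sum_nonneg) (use assms(3,4) le in \<open>auto intro!: mult_nonneg_nonneg\<close>)
  moreover have "w z0 * (a z0 - ?Mn) \<ge> \<delta> * (a z0 - ?Mn)"
    by (rule mult_right_mono) (use assms(3) z0 le in auto)
  ultimately show ?thesis using z0 by (simp add: algebra_simps)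
qed

definition mxp :: "'a set \<Rightarrow> 'a pmf \<Rightarrow> real" where "mxp S \<nu> = Max (pmf \<nu> ` S)"
definition mnp :: "'a set \<Rightarrow> 'a pmf \<Rightarrow> real" where "mnp S \<nu> = Min (pmf \<nu> ` S)"

lemma contract:
  assumes "finite S" "S \<noteq> {}" "set_pmf \<nu> \<subseteq> S"
    "\<forall>b\<in>S. (\<Sum>a\<in>S. pmf (g a) b) = 1" "\<forall>a\<in>S. \<forall>b\<in>S. \<delta> \<le> pmf (g a) b" "\<delta> \<ge> 0"
  shows "mxp S (bind_pmf \<nu> g) \<le> mxp S \<nu> - \<delta> * (mxp S \<nu> - mnp S \<nu>)"
    and "mnp S (bind_pmf \<nu> g) \<ge> mnp S \<nu> + \<delta> * (mxp S \<nu> - mnp S \<nu>)"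
proof -
  have eq: "pmf (bind_pmf \<nu> g) b = (\<Sum>a\<in>S. pmf (g a) b * pmf \<nu> a)" for b
    by (subst pmf_bind_fin[OF assms(1,3)]) (simp add: mult.commute)
  show "mxp S (bind_pmf \<nu> g) \<le> mxp S \<nu> - \<delta> * (mxp S \<nu> - mnp S \<nu>)"
    unfolding mxp_def
    by (subst Max_le_iff) (use assms in \<open>auto simp: eq mnp_def mxp_def intro!: mix_upper\<close>)
  show "mnp S (bind_pmf \<nu> g) \<ge> mnp S \<nu> + \<delta> * (mxp S \<nu> - mnp S \<nu>)"
    unfolding mnp_def
    by (subst Min_ge_iff) (use assms in \<open>auto simp: eq mnp_def mxp_def intro!: mix_lower\<close>)
qed



lemma conv:
  fixes E :: "('v::finite \<times> 'v) set"
  assumes irr: "irrefl E" and kpos: "k > 0" and dpos: "\<delta> > 0"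
    and minor: "\<forall>a\<in>configs M. \<forall>b\<in>configs M. \<delta> \<le> pmf (reshuffle_law E a k) b"
    and supp: "set_pmf \<nu> \<subseteq> configs M" and xi: "\<xi> \<in> configs M"
  shows "(\<lambda>t. pmf (evo E \<nu> t) \<xi>) \<longlonglongrightarrow> 1 / real (card (configs M :: ('v \<Rightarrow> nat) set))"
proof -
  define S where "S = (configs M :: ('v \<Rightarrow> nat) set)"
  have fS: "finite S" and neS: "S \<noteq> {}" using finite_configs configs_ne unfolding S_def by auto
  have cpos: "card S > 0" using fS neS by (simp add: card_gt_0_iff)
  define mx where "mx t = mxp S (evo E \<nu> t)" for t
  define mn where "mn t = mnp S (evo E \<nu> t)" for t
  define D where "D t = mx t - mn t" for t
  have sup: "set_pmf (evo E \<nu> t) \<subseteq> S" for t using evo_support[OF irr supp] S_def by simp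
  have bnd: "mn t \<le> pmf (evo E \<nu> t) b \<and> pmf (evo E \<nu> t) b \<le> mx t" if "b \<in> S" for t b
    using that fS by (auto simp: mn_def mx_def mnp_def mxp_def)
  have avg: "mn t \<le> 1 / real (card S) \<and> 1 / real (card S) \<le> mx t" for t
  proof -
    have s1: "(\<Sum>b\<in>S. pmf (evo E \<nu> t) b) = 1" by (rule sum_pmf_eq_1[OF fS sup])
    have "real (card S) * mn t \<le> 1"
      using sum_bounded_below[of S "mn t" "pmf (evo E \<nu> t)"] bnd s1 by auto
    moreover have "1 \<le> real (card S) * mx t"
      using sum_bounded_above[of S "pmf (evo E \<nu> t)" "mx t"] bnd s1 by auto
    ultimately show ?thesis using cpos by (simp add: field_simps)
  qed
  have Dnn: "D t \<ge> 0" for t using avg[of t] by (simp add: D_def)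
  have colstep: "\<forall>b\<in>S. (\<Sum>a\<in>S. pmf (reshuffle_step E a) b) = 1"
    using col_sum[OF irr] S_def by simp
  have dec: "D (Suc t) \<le> D t" for t
  proof -
    have a: "mxp S (evo E \<nu> t \<bind> reshuffle_step E) \<le> mxp S (evo E \<nu> t)"
      using contract(1)[OF fS neS sup colstep, of 0 t] by simp
    have b: "mnp S (evo E \<nu> t \<bind> reshuffle_step E) \<ge> mnp S (evo E \<nu> t)"
      using contract(2)[OF fS neS sup colstep, of 0 t] by simp
    show ?thesis using a b by (simp add: D_def mx_def mn_def)
  qed
  have collaw: "\<forall>b\<in>S. (\<Sum>a\<in>S. pmf (reshuffle_law E a k) b) = 1"
    using col_sum_law[OF irr] S_def by simp
  have contr: "D (t + k) \<le> (1 - 2 * \<delta>) * D t" for t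
  proof -
    have mi: "\<forall>a\<in>S. \<forall>b\<in>S. \<delta> \<le> pmf (reshuffle_law E a k) b" using minor S_def by simp
    have a: "mx (t + k) \<le> mx t - \<delta> * (mx t - mn t)"
      using contract(1)[OF fS neS sup collaw mi, of t] dpos by (simp add: mx_def mn_def evo_add)
    have b: "mn (t + k) \<ge> mn t + \<delta> * (mx t - mn t)"
      using contract(2)[OF fS neS sup collaw mi, of t] dpos by (simp add: mx_def mn_def evo_add)
    show ?thesis using a b by (simp add: D_def algebra_simps)
  qed
  define r where "r = max 0 (1 - 2 * \<delta>)"
  have r0: "r \<ge> 0" and r1: "r < 1" using dpos by (auto simp: r_def)
  have contr': "D (t + k) \<le> r * D t" for t
  proof -
    have "(1 - 2 * \<delta>) * D t \<le> r * D t" by (rule mult_right_mono) (auto simp: r_def Dnn)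
    then show ?thesis using contr[of t] by simp
  qed
  have geo: "D (j * k) \<le> r ^ j * D 0" for j
  proof (induction j)
    case 0 then show ?case by simp
  next
    case (Suc j)
    have "D (Suc j * k) = D (j * k + k)" by (simp add: add.commute)
    also have "\<dots> \<le> r * D (j * k)" by (rule contr')
    also have "\<dots> \<le> r * (r ^ j * D 0)" by (rule mult_left_mono[OF Suc r0])
    finally show ?case by simp
  qed
  have anti: "D n \<le> D m" if "m \<le> n" for m n
    using lift_Suc_antimono_le[of D, OF dec that] .
  have lim0: "(\<lambda>j. r ^ j * D 0) \<longlonglongrightarrow> 0"
    by (rule tendsto_mult_left_zero[OF LIMSEQ_power_zero]) (use r0 r1 in simp)
  have cS: "card (configs M :: ('v \<Rightarrow> nat) set) = card S" using S_def by simp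
  show ?thesis
    unfolding cS
  proof (rule LIMSEQ_I)
    fix \<epsilon> :: real assume ep: "\<epsilon> > 0"
    from lim0[unfolded lim_sequentially, rule_format, OF ep] obtain J where
      J: "\<forall>j\<ge>J. dist (r ^ j * D 0) 0 < \<epsilon>" by blast
    have "r ^ J * D 0 < \<epsilon>" using J by auto
    show "\<exists>no. \<forall>n\<ge>no. norm (pmf (evo E \<nu> n) \<xi> - 1 / real (card S)) < \<epsilon>"
    proof (intro exI allI impI)
      fix n assume "J * k \<le> n"
      then have "D n \<le> D (J * k)" by (rule anti)
      also have "\<dots> \<le> r ^ J * D 0" by (rule geo)
      also have "\<dots> < \<epsilon>" by fact
      finally have "D n < \<epsilon>" .
      moreover have xi': "\<xi> \<in> S" using xi S_def by simp
      ultimately show "norm (pmf (evo E \<nu> n) \<xi> - 1 / real (card S)) < \<epsilon>"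
        using bnd[OF xi', of n] avg[of n] by (auto simp: D_def abs_if)
    qed
  qed
qed



definition reach :: "('v \<times> 'v) set \<Rightarrow> ('v \<Rightarrow> nat) \<Rightarrow> ('v \<Rightarrow> nat) \<Rightarrow> bool" where
  "reach E \<xi>0 \<xi> = (\<exists>n. \<xi> \<in> set_pmf (reshuffle_law E \<xi>0 n))"

lemma reach_step: "reach E \<xi>0 \<xi> \<Longrightarrow> \<zeta> \<in> set_pmf (reshuffle_step E \<xi>) \<Longrightarrow> reach E \<xi>0 \<zeta>"
  unfolding reach_def by (metis reshuffle_law.simps(2) set_bind_pmf UN_I)

lemma chip:
  fixes E :: "('v::finite \<times> 'v) set"
  assumes irr: "irrefl E" and ab: "(a,b) \<in> E\<^sup>*" and r: "reach E \<xi>0 \<xi>" and pos: "\<xi> a > 0"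
  shows "reach E \<xi>0 (mv \<xi> a b)"
  using ab
proof (induction rule: rtrancl_induct)
  case base
  then show ?case using r by (simp add: mv_def)
next
  case (step b c)
  have bc: "b \<noteq> c" using step.hyps(2) irr by (rule irreflD'[rotated])
  show ?case
  proof (cases "a = b")
    case True
    then show ?thesis using step.hyps(2) pos r mv_step[OF irr, of b c \<xi>]
      by (auto simp: mv_def intro: reach_step)
  next
    case False
    define \<xi>1 where "\<xi>1 = mv \<xi> a b"
    have p1: "\<xi>1 b > 0" using False by (simp add: \<xi>1_def mv_def)
    have "reach E \<xi>0 (mv \<xi>1 b c)"
      using reach_step[OF step.IH[folded \<xi>1_def] mv_step[where \<xi>=\<xi>1, OF irr step.hyps(2) p1]] .
    moreover have "mv \<xi>1 b c = mv \<xi> a c"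
      using False bc pos by (auto simp: \<xi>1_def mv_def fun_eq_iff)
    ultimately show ?thesis by simp
  qed
qed

lemma reach_support:
  fixes E :: "('v::finite \<times> 'v) set"
  assumes "irrefl E" "\<xi>0 \<in> configs M" "reach E \<xi>0 \<xi>"
  shows "\<xi> \<in> configs M"
  using assms law_support[OF assms(1,2)] unfolding reach_def by blast

lemma sum_remove1: "(\<Sum>x\<in>UNIV. g x) = g a + (\<Sum>x\<in>UNIV-{a}. g x)" for g :: "'v::finite \<Rightarrow> nat"
  by (rule sum.remove) auto

lemma reach_all:
  fixes E :: "('v::finite \<times> 'v) set"
  assumes irr: "irrefl E" and conn: "\<forall>x y. (x,y) \<in> E\<^sup>*"
    and s0: "\<xi>0 \<in> configs M" and s1: "\<xi>' \<in> configs M"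
  shows "reach E \<xi>0 \<xi>'"
proof -
  have main: "\<forall>\<xi>. reach E \<xi>0 \<xi> \<longrightarrow> (\<Sum>x\<in>UNIV. \<xi> x - \<xi>' x) = n \<longrightarrow> reach E \<xi>0 \<xi>'" for n
  proof (induction n)
    case 0
    show ?case
    proof (intro allI impI)
      fix \<xi> assume r: "reach E \<xi>0 \<xi>" and d: "(\<Sum>x\<in>UNIV. \<xi> x - \<xi>' x) = 0"
      have sM: "\<xi> \<in> configs M" by (rule reach_support[OF irr s0 r])
      have le: "\<forall>x. \<xi> x \<le> \<xi>' x" using d by simp
      have "\<xi> = \<xi>'"
      proof (rule ccontr)
        assume "\<xi> \<noteq> \<xi>'"
        then obtain x where "\<xi> x \<noteq> \<xi>' x" by auto
        with le have "\<xi> x < \<xi>' x" using le_neq_implies_less by blast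
        then have "(\<Sum>x\<in>UNIV. \<xi> x) < (\<Sum>x\<in>UNIV. \<xi>' x)"
          using le by (intro sum_strict_mono_ex1) auto
        then show False using sM s1 by (simp add: configs_def)
      qed
      then show "reach E \<xi>0 \<xi>'" using r by simp
    qed
  next
    case (Suc n)
    show ?case
    proof (intro allI impI)
      fix \<xi> assume r: "reach E \<xi>0 \<xi>" and d: "(\<Sum>x\<in>UNIV. \<xi> x - \<xi>' x) = Suc n"
      have sM: "\<xi> \<in> configs M" by (rule reach_support[OF irr s0 r])
      obtain a where a: "\<xi> a > \<xi>' a"
      proof (rule ccontr)
        assume "\<not> thesis"
        then have "\<forall>x. \<not> \<xi>' x < \<xi> x" using that by blast
        then have "\<forall>x. \<xi> x - \<xi>' x = 0" by (simp add: not_less)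
        then show False using d by simp
      qed
      obtain b where b: "\<xi> b < \<xi>' b"
      proof (rule ccontr)
        assume "\<not> thesis"
        then have "\<forall>x. \<not> \<xi> x < \<xi>' x" using that by blast
        then have le: "\<forall>x. \<xi>' x \<le> \<xi> x" by (simp add: not_less)
        then have "(\<Sum>x\<in>UNIV. \<xi>' x) < (\<Sum>x\<in>UNIV. \<xi> x)"
          using a by (intro sum_strict_mono_ex1) auto
        then show False using sM s1 by (simp add: configs_def)
      qed
      have ab: "a \<noteq> b" using a b by auto
      have r2: "reach E \<xi>0 (mv \<xi> a b)"
        by (rule chip[OF irr conn[rule_format] r]) (use a in auto)
      have "(\<Sum>x\<in>UNIV. mv \<xi> a b x - \<xi>' x) = (mv \<xi> a b a - \<xi>' a) + (\<Sum>x\<in>UNIV-{a}. mv \<xi> a b x - \<xi>' x)"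
        by (rule sum_remove1)
      also have "(\<Sum>x\<in>UNIV-{a}. mv \<xi> a b x - \<xi>' x) = (\<Sum>x\<in>UNIV-{a}. \<xi> x - \<xi>' x)"
        by (rule sum.cong[OF refl]) (use ab b in \<open>auto simp: mv_def\<close>)
      also have "mv \<xi> a b a - \<xi>' a = (\<xi> a - \<xi>' a) - 1" using ab by (simp add: mv_def)
      finally have "(\<Sum>x\<in>UNIV. mv \<xi> a b x - \<xi>' x) + 1 = (\<xi> a - \<xi>' a) + (\<Sum>x\<in>UNIV-{a}. \<xi> x - \<xi>' x)"
        using a by simp
      also have "\<dots> = Suc n" using d sum_remove1[of "\<lambda>x. \<xi> x - \<xi>' x" a] by simp
      finally have "(\<Sum>x\<in>UNIV. mv \<xi> a b x - \<xi>' x) = n" by simp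
      then show "reach E \<xi>0 \<xi>'" using Suc.IH r2 by blast
    qed
  qed
  have "reach E \<xi>0 \<xi>0" unfolding reach_def by (rule exI[of _ 0]) simp
  then show ?thesis using main by blast
qed

lemma minorization:
  fixes E :: "('v::finite \<times> 'v) set"
  assumes irr: "irrefl E" and conn: "\<forall>x y. (x,y) \<in> E\<^sup>*"
  shows "\<exists>k>0. \<exists>\<delta>>0. \<forall>a\<in>configs M. \<forall>b\<in>configs M. \<delta> \<le> pmf (reshuffle_law E a k) b"
proof -
  define S where "S = (configs M :: ('v \<Rightarrow> nat) set)"
  have fS: "finite S" and neS: "S \<noteq> {}" using finite_configs configs_ne unfolding S_def by auto
  define nf where "nf p = (SOME n. snd p \<in> set_pmf (reshuffle_law E (fst p) n))" for p
  have nf: "snd p \<in> set_pmf (reshuffle_law E (fst p) (nf p))" if "p \<in> S \<times> S" for p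
  proof -
    have "reach E (fst p) (snd p)" using reach_all[OF irr conn] that S_def by (auto simp: mem_Times_iff)
    then show ?thesis unfolding reach_def nf_def by (rule someI_ex)
  qed
  define k where "k = Suc (Max (nf ` (S \<times> S)))"
  have mem: "b \<in> set_pmf (reshuffle_law E a k)" if "a \<in> S" "b \<in> S" for a b
  proof -
    have "nf (a,b) \<le> Max (nf ` (S \<times> S))" using that fS by (intro Max_ge) auto
    then have "nf (a,b) \<le> k" by (simp add: k_def)
    then show ?thesis using law_mono[of "nf (a,b)" k E a] nf[of "(a,b)"] that by auto
  qed
  define \<delta> where "\<delta> = Min ((\<lambda>p. pmf (reshuffle_law E (fst p) k) (snd p)) ` (S \<times> S))"
  have dpos: "\<delta> > 0" unfolding \<delta>_def
  proof (subst Min_gr_iff)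
    show "finite ((\<lambda>p. pmf (reshuffle_law E (fst p) k) (snd p)) ` (S \<times> S))" using fS by simp
    show "(\<lambda>p. pmf (reshuffle_law E (fst p) k) (snd p)) ` (S \<times> S) \<noteq> {}" using neS by simp
    show "\<forall>x\<in>(\<lambda>p. pmf (reshuffle_law E (fst p) k) (snd p)) ` (S \<times> S). 0 < x"
      using mem by (auto simp: set_pmf_iff pmf_nonneg order.not_eq_order_implies_strict)
  qed
  have "\<forall>a\<in>S. \<forall>b\<in>S. \<delta> \<le> pmf (reshuffle_law E a k) b"
    unfolding \<delta>_def using fS by (auto intro!: Min_le image_eqI[of _ _ "(a,b)" for a b])
  then show ?thesis using dpos unfolding S_def k_def by blast
qed



theorem lemma1:
  fixes E :: "('v::finite \<times> 'v) set" and M :: nat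
  assumes "connected_graph E"
  shows "\<exists>\<pi>. reshuffle_stationary E M \<pi>
            \<and> (\<forall>\<pi>'. reshuffle_stationary E M \<pi>' \<longrightarrow> \<pi>' = \<pi>)
            \<and> (\<forall>\<xi>\<in>configs M. \<forall>\<eta>\<in>configs M.
                 (\<lambda>t. pmf (reshuffle_law E \<eta> t) \<xi>) \<longlonglongrightarrow> pmf \<pi> \<xi>)"
proof -
  define S where "S = (configs M :: ('v \<Rightarrow> nat) set)"
  have fS: "finite S" and neS: "S \<noteq> {}" using finite_configs configs_ne unfolding S_def by auto
  have irr: "irrefl E" and conn: "\<forall>x y. (x,y) \<in> E\<^sup>*"
    using assms by (auto simp: connected_graph_def)
  obtain k \<delta> where kpos: "k > 0" and dpos: "\<delta> > 0"
    and minor: "\<forall>a\<in>configs M. \<forall>b\<in>configs M. \<delta> \<le> pmf (reshuffle_law E a k) b"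
    using minorization[OF irr conn, of M] by blast
  note cv = conv[OF irr kpos dpos minor]
  define \<pi> where "\<pi> = pmf_of_set S"
  have ppi: "pmf \<pi> \<xi> = (if \<xi> \<in> S then 1 / real (card S) else 0)" for \<xi>
    using fS neS by (simp add: \<pi>_def indicator_def)
  have stat: "reshuffle_stationary E M \<pi>"
    unfolding reshuffle_stationary_def
  proof
    show "set_pmf \<pi> \<subseteq> configs M" using fS neS by (simp add: \<pi>_def S_def)
    show "bind_pmf \<pi> (reshuffle_step E) = \<pi>"
    proof (rule pmf_eqI)
      fix i
      have "pmf (bind_pmf \<pi> (reshuffle_step E)) i = (\<Sum>a\<in>S. pmf \<pi> a * pmf (reshuffle_step E a) i)"
        by (rule pmf_bind_fin[OF fS]) (use fS neS in \<open>simp add: \<pi>_def\<close>)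
      also have "\<dots> = (\<Sum>a\<in>S. pmf (reshuffle_step E a) i) / real (card S)"
        by (simp add: ppi sum_divide_distrib)
      also have "\<dots> = pmf \<pi> i"
      proof (cases "i \<in> S")
        case True
        then show ?thesis using col_sum[OF irr, of i M] by (simp add: ppi S_def)
      next
        case False
        have "pmf (reshuffle_step E a) i = 0" if "a \<in> S" for a
          using step_support[OF irr, of a M] that False by (auto simp: S_def set_pmf_iff)
        then show ?thesis using False by (simp add: ppi)
      qed
      finally show "pmf (bind_pmf \<pi> (reshuffle_step E)) i = pmf \<pi> i" .
    qed
  qed
  have lim: "(\<lambda>t. pmf (reshuffle_law E \<eta> t) \<xi>) \<longlonglongrightarrow> pmf \<pi> \<xi>"
    if "\<xi> \<in> configs M" "\<eta> \<in> configs M" for \<xi> \<eta>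
    using cv[of "return_pmf \<eta>" \<xi>] that by (simp add: law_evo ppi S_def)
  have uniq: "\<pi>' = \<pi>" if st: "reshuffle_stationary E M \<pi>'" for \<pi>'
  proof (rule pmf_eqI)
    fix i
    have sup: "set_pmf \<pi>' \<subseteq> configs M" and bi: "bind_pmf \<pi>' (reshuffle_step E) = \<pi>'"
      using st by (auto simp: reshuffle_stationary_def)
    show "pmf \<pi>' i = pmf \<pi> i"
    proof (cases "i \<in> S")
      case True
      have "(\<lambda>t. pmf (evo E \<pi>' t) i) \<longlonglongrightarrow> 1 / real (card S)"
        using cv[OF sup, of i] True by (simp add: S_def)
      then have "(\<lambda>t. pmf \<pi>' i) \<longlonglongrightarrow> 1 / real (card S)" by (simp add: evo_const[OF bi])
      then have "pmf \<pi>' i = 1 / real (card S)" by (simp add: LIMSEQ_const_iff)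
      then show ?thesis using True by (simp add: ppi)
    next
      case False
      then have "pmf \<pi>' i = 0" using sup by (auto simp: S_def set_pmf_iff)
      then show ?thesis using False by (simp add: ppi)
    qed
  qed
  show ?thesis using stat uniq lim by blast
qed

end
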